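(* Let $d\in\mathbb{N}$, $\kappa\in(0,\infty)$, and let $\mathfrak{l}\colon\mathbb{R}^d\times\mathbb{R}^d\to\mathbb{R}$ satisfy $\mathfrak{l}(\theta,\vartheta)=\frac{\kappa}{2}\|\theta-\vartheta\|^2$ for all $\theta,\vartheta\in\mathbb{R}^d$. Let $(\Omega,\mathcal{F},\mathbb{P})$ be a probability space, let $X_{n,m}\colon\Omega\to\mathbb{R}^d$, $n,m\in\mathbb{Z}$, be i.i.d. random variables with $\sup_{n,m\in\mathbb{Z}}\|X_{n,m}(\omega)\|<\infty$ for every $\omega\in\Omega$, let $M\in\mathbb{N}$, $\gamma\in(0,2/\kappa)$, let $\Theta\colon\mathbb{N}_0\times\Omega\to\mathbb{R}^d$ satisfy for all $n\in\mathbb{N}$ $$\Theta_n=\Theta_{n-1}-\frac{\gamma}{M}\Big[\sum_{m=1}^M(\nabla_\theta\mathfrak{l})(\Theta_{n-1},X_{n,m})\Big],$$ and let $k\in\mathbb{Z}$ satisfy $$\Theta_0=\sum_{n=0}^\infty\frac{\kappa\gamma(1-\kappa\gamma)^n}{M}\Big[\sum_{m=k+1}^{k+M}X_{-n,m}\Big].$$ Then $$\sup_{n\in\mathbb{N}_0}\|\Theta_n\|\le\frac{2}{2-\kappa\gamma}\Big[\sup_{v,w\in\mathbb{Z}}\|X_{v,w}\|\Big].$$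
   Context: $\|\cdot\|$ is the Euclidean norm; $\nabla_\theta\mathfrak{l}$ is the gradient in the first argument. *)

theory Defs
  imports "HOL-Probability.Probability"
begin

end

theory Submission
  imports Defs "HOL-Probability.Probability"
begin

lemma gl:
  fixes l :: "'a::euclidean_space \<Rightarrow> 'a \<Rightarrow> real" and g :: "'a \<Rightarrow> 'a \<Rightarrow> 'a"
  assumes l_def: "\<And>\<theta> \<eta>. l \<theta> \<eta> = \<kappa> / 2 * (norm (\<theta> - \<eta>))\<^sup>2"
    and grad_l: "\<And>\<theta> \<eta>. ((\<lambda>t. l t \<eta>) has_derivative (\<lambda>h. inner (g \<theta> \<eta>) h)) (at \<theta>)"
  shows "g \<theta> \<eta> = \<kappa> *\<^sub>R (\<theta> - \<eta>)"
proof -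
  have lf: "(\<lambda>t. l t \<eta>) = (\<lambda>t. \<kappa> / 2 * inner (t - \<eta>) (t - \<eta>))"
    by (simp add: l_def power2_norm_eq_inner)
  have "((\<lambda>t. \<kappa> / 2 * inner (t - \<eta>) (t - \<eta>)) has_derivative (\<lambda>h. inner (\<kappa> *\<^sub>R (\<theta> - \<eta>)) h)) (at \<theta>)"
    apply (rule derivative_eq_intros refl | simp)+
    apply (rule ext) apply (simp add: inner_commute field_simps)
    done
  then have "(\<lambda>h. inner (g \<theta> \<eta>) h) = (\<lambda>h. inner (\<kappa> *\<^sub>R (\<theta> - \<eta>)) h)"
    using has_derivative_unique grad_l lf by metis
  then have "inner (g \<theta> \<eta> - \<kappa> *\<^sub>R (\<theta> - \<eta>)) (g \<theta> \<eta> - \<kappa> *\<^sub>R (\<theta> - \<eta>)) = 0"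
    by (metis inner_diff_left right_minus_eq)
  then show ?thesis by simp
qed

lemma step_eq:
  fixes T :: "'a::euclidean_space" and Y :: "int \<Rightarrow> 'a" and Mb :: nat
  assumes Mpos: "real Mb > 0"
  shows "T - (\<gamma> / real Mb) *\<^sub>R (\<Sum>m\<in>{1..int Mb}. \<kappa> *\<^sub>R (T - Y m))
     = (1 - \<kappa> * \<gamma>) *\<^sub>R T + (\<kappa> * \<gamma> / real Mb) *\<^sub>R (\<Sum>m\<in>{1..int Mb}. Y m)"
proof -
  have eq: "(\<Sum>m\<in>{1..int Mb}. \<kappa> *\<^sub>R (T - Y m)) = \<kappa> *\<^sub>R (real Mb *\<^sub>R T - (\<Sum>m\<in>{1..int Mb}. Y m))"
    by (simp add: scaleR_sum_right[symmetric] sum_subtractf sum_constant_scaleR)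
  have c: "(\<gamma> / real Mb) * \<kappa> * real Mb = \<kappa> * \<gamma>" using Mpos by simp
  show ?thesis unfolding eq unfolding scaleR_diff_right scaleR_scaleR c
    using Mpos by (simp add: algebra_simps)
qed

theorem lemma5p4:
  fixes \<kappa> \<gamma> :: real and Mb :: nat and k :: int
    and l :: "'a::euclidean_space \<Rightarrow> 'a \<Rightarrow> real"
    and grad_l :: "'a \<Rightarrow> 'a \<Rightarrow> 'a"
    and P :: "'w measure"
    and X :: "int \<Rightarrow> int \<Rightarrow> 'w \<Rightarrow> 'a"
    and \<Theta> :: "nat \<Rightarrow> 'w \<Rightarrow> 'a"
  assumes kappa_pos: "\<kappa> > 0"
    and l_def: "\<And>\<theta> \<eta>. l \<theta> \<eta> = \<kappa> / 2 * (norm (\<theta> - \<eta>))\<^sup>2"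
    and grad_l: "\<And>\<theta> \<eta>. ((\<lambda>t. l t \<eta>) has_derivative (\<lambda>h. inner (grad_l \<theta> \<eta>) h)) (at \<theta>)"
    and P: "prob_space P"
    and X_rv: "\<And>n m. X n m \<in> borel_measurable P"
    and X_indep: "prob_space.indep_vars P (\<lambda>_. borel) (\<lambda>i. X (fst i) (snd i)) UNIV"
    and X_id: "\<And>n m. distr P borel (X n m) = distr P borel (X 0 0)"
    and X_bdd: "\<And>\<omega>. \<omega> \<in> space P \<Longrightarrow> bdd_above (range (\<lambda>i. norm (X (fst i) (snd i) \<omega>)))"
    and Mb: "Mb \<ge> 1"
    and gamma: "0 < \<gamma>" "\<gamma> < 2 / \<kappa>"
    and rec: "\<And>n \<omega>. \<omega> \<in> space P \<Longrightarrow> \<Theta> (Suc n) \<omega> = \<Theta> n \<omega> -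
        (\<gamma> / real Mb) *\<^sub>R (\<Sum>m\<in>{1..int Mb}. grad_l (\<Theta> n \<omega>) (X (int (Suc n)) m \<omega>))"
    and init: "\<And>\<omega>. \<omega> \<in> space P \<Longrightarrow>
        (\<lambda>n. (\<kappa> * \<gamma> * (1 - \<kappa> * \<gamma>) ^ n / real Mb) *\<^sub>R
               (\<Sum>m\<in>{k+1..k + int Mb}. X (- int n) m \<omega>)) sums \<Theta> 0 \<omega>"
  shows "\<forall>\<omega>\<in>space P. \<forall>n. norm (\<Theta> n \<omega>) \<le>
           2 / (2 - \<kappa> * \<gamma>) * (SUP i. norm (X (fst i) (snd i) \<omega>))"
proof (intro ballI allI)
  fix \<omega> n assume w: "\<omega> \<in> space P"
  define S where "S = (SUP i. norm (X (fst i) (snd i) \<omega>))"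
  define r where "r = 1 - \<kappa> * \<gamma>"
  define C where "C = 2 / (2 - \<kappa> * \<gamma>)"
  have kg: "0 < \<kappa> * \<gamma>" "\<kappa> * \<gamma> < 2"
    using kappa_pos gamma by (auto simp: field_simps)
  have XS: "norm (X a b \<omega>) \<le> S" for a b
    unfolding S_def using cSUP_upper[OF _ X_bdd[OF w], of "(a,b)"] by simp
  have S0: "0 \<le> S" using XS[of 0 0] norm_ge_zero order_trans by blast
  have r1: "\<bar>r\<bar> < 1" using kg by (simp add: r_def)
  have key: "\<kappa> * \<gamma> \<le> C * (1 - \<bar>r\<bar>)"
  proof (cases "r \<ge> 0")
    case True
    then have "1 - \<bar>r\<bar> = \<kappa> * \<gamma>" by (simp add: r_def)
    moreover have "1 \<le> C" using kg by (simp add: C_def field_simps)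
    ultimately show ?thesis using kg mult_right_mono[of 1 C "\<kappa> * \<gamma>"] by simp
  next
    case False
    then have h1: "1 - \<bar>r\<bar> = 2 - \<kappa> * \<gamma>" by (simp add: r_def)
    have h2: "C * (2 - \<kappa> * \<gamma>) = 2" using kg by (simp add: C_def field_simps)
    show ?thesis unfolding h1 using h2 kg by linarith
  qed
  have g: "\<And>a b. grad_l a b = \<kappa> *\<^sub>R (a - b)"
    by (rule gl[OF l_def grad_l])
  have sumX: "norm (\<Sum>m\<in>A. X a m \<omega>) \<le> real (card A) * S" for A a
    using sum_norm_le[of A "\<lambda>m. X a m \<omega>" "\<lambda>_. S"] XS by simp
  have cardA: "card {k+1..k + int Mb} = Mb" by simp
  have cardB: "card {1..int Mb} = Mb" by simp
  have Mpos: "real Mb > 0" using Mb by simp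
  have base: "norm (\<Theta> 0 \<omega>) \<le> C * S"
  proof -
    let ?f = "\<lambda>n. (\<kappa> * \<gamma> * (1 - \<kappa> * \<gamma>) ^ n / real Mb) *\<^sub>R
               (\<Sum>m\<in>{k+1..k + int Mb}. X (- int n) m \<omega>)"
    have eq: "\<Theta> 0 \<omega> = suminf ?f" by (rule sums_unique[OF init[OF w]])
    have bnd: "norm (?f n) \<le> (\<kappa> * \<gamma> * S) * \<bar>r\<bar> ^ n" for n
    proof -
      have ab: "\<bar>\<kappa> * \<gamma> * (1 - \<kappa> * \<gamma>) ^ n / real Mb\<bar> = \<kappa> * \<gamma> * \<bar>r\<bar> ^ n / real Mb"
        unfolding r_def[symmetric] abs_divide abs_mult power_abs using kappa_pos gamma(1) by simp
      have "norm (?f n) = (\<kappa> * \<gamma> * \<bar>r\<bar> ^ n / real Mb) * norm (\<Sum>m\<in>{k+1..k + int Mb}. X (- int n) m \<omega>)"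
        unfolding norm_scaleR ab ..
      also have "\<dots> \<le> (\<kappa> * \<gamma> * \<bar>r\<bar> ^ n / real Mb) * (real Mb * S)"
      proof (rule mult_left_mono)
        show "norm (\<Sum>m\<in>{k+1..k + int Mb}. X (- int n) m \<omega>) \<le> real Mb * S"
          using sumX[of "- int n" "{k+1..k + int Mb}"] unfolding cardA .
        show "0 \<le> \<kappa> * \<gamma> * \<bar>r\<bar> ^ n / real Mb" using kg by simp
      qed
      also have "\<dots> = (\<kappa> * \<gamma> * S) * \<bar>r\<bar> ^ n" using Mpos by simp
      finally show ?thesis .
    qed
    have sg: "summable (\<lambda>n. (\<kappa> * \<gamma> * S) * \<bar>r\<bar> ^ n)"
      using r1 by (intro summable_mult summable_geometric) simp
    have "norm (\<Theta> 0 \<omega>) \<le> (\<Sum>n. (\<kappa> * \<gamma> * S) * \<bar>r\<bar> ^ n)"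
      unfolding eq by (rule norm_suminf_le[OF bnd sg])
    also have "\<dots> = (\<kappa> * \<gamma> * S) / (1 - \<bar>r\<bar>)"
      using r1 by (simp add: suminf_mult suminf_geometric)
    also have "\<dots> \<le> C * S"
    proof -
      have a: "\<kappa> * \<gamma> * S \<le> C * (1 - \<bar>r\<bar>) * S" using mult_right_mono[OF key S0] .
      have "C * (1 - \<bar>r\<bar>) * S = C * S * (1 - \<bar>r\<bar>)" by (simp only: mult_ac)
      with a have "\<kappa> * \<gamma> * S \<le> C * S * (1 - \<bar>r\<bar>)" by simp
      moreover have "0 < 1 - \<bar>r\<bar>" using r1 by simp
      ultimately show ?thesis by (simp add: pos_divide_le_eq)
    qed
    finally show ?thesis .
  qed
  show "norm (\<Theta> n \<omega>) \<le> 2 / (2 - \<kappa> * \<gamma>) * (SUP i. norm (X (fst i) (snd i) \<omega>))"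
    unfolding C_def[symmetric] S_def[symmetric]
  proof (induction n)
    case 0 then show ?case using base .
  next
    case (Suc n)
    let ?Y = "(\<Sum>m\<in>{1..int Mb}. X (int (Suc n)) m \<omega>)"
    have e: "\<Theta> (Suc n) \<omega> = r *\<^sub>R \<Theta> n \<omega> + (\<kappa> * \<gamma> / real Mb) *\<^sub>R ?Y"
      unfolding rec[OF w] g r_def by (rule step_eq[OF Mpos])
    have n2: "norm ((\<kappa> * \<gamma> / real Mb) *\<^sub>R ?Y) = (\<kappa> * \<gamma> / real Mb) * norm ?Y"
      using kg Mpos by simp
    have n3: "norm ?Y \<le> real Mb * S" using sumX[of "int (Suc n)" "{1..int Mb}"] cardB by simp
    have n4: "(\<kappa> * \<gamma> / real Mb) * norm ?Y \<le> (\<kappa> * \<gamma> / real Mb) * (real Mb * S)"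
      by (rule mult_left_mono[OF n3]) (use kg Mpos in simp)
    have "norm (\<Theta> (Suc n) \<omega>) \<le> norm (r *\<^sub>R \<Theta> n \<omega>) + norm ((\<kappa> * \<gamma> / real Mb) *\<^sub>R ?Y)"
      unfolding e by (rule norm_triangle_ineq)
    then have "norm (\<Theta> (Suc n) \<omega>) \<le> \<bar>r\<bar> * norm (\<Theta> n \<omega>) + (\<kappa> * \<gamma> / real Mb) * (real Mb * S)"
    proof -
      have "norm (r *\<^sub>R \<Theta> n \<omega>) = \<bar>r\<bar> * norm (\<Theta> n \<omega>)" by simp
      with n2 n4 show ?thesis using \<open>norm (\<Theta> (Suc n) \<omega>) \<le> _\<close> by linarith
    qed
    also have "\<dots> \<le> \<bar>r\<bar> * (C * S) + \<kappa> * \<gamma> * S"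
    proof -
      have "\<bar>r\<bar> * norm (\<Theta> n \<omega>) \<le> \<bar>r\<bar> * (C * S)" by (rule mult_left_mono[OF Suc.IH abs_ge_zero])
      moreover have "(\<kappa> * \<gamma> / real Mb) * (real Mb * S) = \<kappa> * \<gamma> * S" using Mpos by simp
      ultimately show ?thesis by linarith
    qed
    also have "\<dots> \<le> C * S"
    proof -
      have a: "\<kappa> * \<gamma> * S \<le> C * (1 - \<bar>r\<bar>) * S" using mult_right_mono[OF key S0] .
      have "C * (1 - \<bar>r\<bar>) * S = C * S - \<bar>r\<bar> * (C * S)" by (simp add: algebra_simps)
      with a show ?thesis by linarith
    qed
    finally show ?case .
  qed
qed

end
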